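(* Let $k\ge1$ and $n\ge 2k+1$. If the Kneser graph $K(n,k)$ admits a Hamilton cycle, then the bipartite Kneser graph $H(n,k)$ admits a Hamilton cycle or a Hamilton path.
   Context: $K(n,k)$ has as vertices all $k$-element subsets of $[n]$, two sets adjacent iff disjoint. The bipartite Kneser graph $H(n,k)$ has as vertices all $k$-element and all $(n-k)$-element subsets of $[n]$, with an edge between $A$ and $B$ if and only if $A\subseteq B$. *)

theory Defs
  imports Main
begin

definition hamilton_cycle :: "'a set \<Rightarrow> ('a \<Rightarrow> 'a \<Rightarrow> bool) \<Rightarrow> 'a list \<Rightarrow> bool" where
  "hamilton_cycle V E xs \<longleftrightarrow>
     distinct xs \<and> set xs = V \<and> length xs \<ge> 3 \<and>
     (\<forall>i. Suc i < length xs \<longrightarrow> E (xs ! i) (xs ! Suc i)) \<and>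
     E (last xs) (hd xs)"

definition hamilton_path :: "'a set \<Rightarrow> ('a \<Rightarrow> 'a \<Rightarrow> bool) \<Rightarrow> 'a list \<Rightarrow> bool" where
  "hamilton_path V E xs \<longleftrightarrow>
     distinct xs \<and> set xs = V \<and> xs \<noteq> [] \<and>
     (\<forall>i. Suc i < length xs \<longrightarrow> E (xs ! i) (xs ! Suc i))"

definition has_hamilton_cycle :: "'a set \<Rightarrow> ('a \<Rightarrow> 'a \<Rightarrow> bool) \<Rightarrow> bool" where
  "has_hamilton_cycle V E \<longleftrightarrow> (\<exists>xs. hamilton_cycle V E xs)"

definition has_hamilton_path :: "'a set \<Rightarrow> ('a \<Rightarrow> 'a \<Rightarrow> bool) \<Rightarrow> bool" where
  "has_hamilton_path V E \<longleftrightarrow> (\<exists>xs. hamilton_path V E xs)"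

definition kneser_vertices :: "nat \<Rightarrow> nat \<Rightarrow> nat set set" where
  "kneser_vertices n k = {A. A \<subseteq> {1..n} \<and> card A = k}"

definition kneser_adj :: "nat set \<Rightarrow> nat set \<Rightarrow> bool" where
  "kneser_adj A B \<longleftrightarrow> A \<inter> B = {}"

definition bip_kneser_vertices :: "nat \<Rightarrow> nat \<Rightarrow> nat set set" where
  "bip_kneser_vertices n k =
     {A. A \<subseteq> {1..n} \<and> card A = k} \<union> {B. B \<subseteq> {1..n} \<and> card B = n - k}"

definition bip_kneser_adj :: "nat \<Rightarrow> nat \<Rightarrow> nat set \<Rightarrow> nat set \<Rightarrow> bool" where
  "bip_kneser_adj n k A B \<longleftrightarrow>
     (card A = k \<and> card B = n - k \<and> A \<subseteq> B) \<or> (card B = k \<and> card A = n - k \<and> B \<subseteq> A)"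

end

theory Submission
  imports Defs "HOL-Number_Theory.Cong"
begin

lemma even_mod_even: "even (N::nat) \<Longrightarrow> even (x mod N) \<longleftrightarrow> even x"
  by (metis div_mult_mod_eq even_add even_mult_iff)

lemma mod_cancel_lt: "(a + (m::nat)) mod N = (a + m') mod N \<Longrightarrow> m < N \<Longrightarrow> m' < N \<Longrightarrow> m = m'"
  by (metis cong_add_lcancel_nat cong_def cong_less_modulus_unique_nat)

lemma odd_double: "odd (N::nat) \<Longrightarrow> m < 2*N \<Longrightarrow> m' < 2*N \<Longrightarrow> m mod N = m' mod N
   \<Longrightarrow> (even m \<longleftrightarrow> even m') \<Longrightarrow> m = m'"
proof -
  assume a: "odd N" "m < 2*N" "m' < 2*N" "m mod N = m' mod N" "(even m \<longleftrightarrow> even m')"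
  have N0: "N > 0" using a(1) by (cases N) auto
  have r: "x mod N = (if x < N then x else x - N)" if "x < 2*N" for x
    using that by (simp add: mod_if)
  show "m = m'"
    using a r[of m] r[of m'] a(2,3)
    by (auto split: if_splits) (metis a(1) add_diff_inverse_nat even_add)+
qed

lemma nonbip:
  fixes P :: "nat set \<Rightarrow> bool" and n k :: nat
  assumes k1: "k \<ge> 1" and nk: "n \<ge> 2*k+1"
    and H: "\<And>X Y. X \<subseteq> {1..n} \<Longrightarrow> card X = k \<Longrightarrow> Y \<subseteq> {1..n} \<Longrightarrow> card Y = k
            \<Longrightarrow> X \<inter> Y = {} \<Longrightarrow> P X \<noteq> P Y"
  shows False
proof -
  have step: "P {t+1..t+k} = P {Suc t+1..Suc t+k}" if "t < k" for t
  proof -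
    have sub: "{t+1..t+k+1} \<subseteq> {1..n}" using that nk by auto
    have "card ({1..n} - {t+1..t+k+1}) = n - (k+1)"
      using card_Diff_subset[OF _ sub] by simp
    then have "card ({1..n} - {t+1..t+k+1}) \<ge> k" using nk by simp
    then obtain R where R: "R \<subseteq> {1..n} - {t+1..t+k+1}" "card R = k"
      using obtain_subset_with_card_n by metis
    have "P {t+1..t+k} \<noteq> P R"
      by (rule H) (use R that nk in auto)
    moreover have "P {Suc t+1..Suc t+k} \<noteq> P R"
      by (rule H) (use R that nk in auto)
    ultimately show ?thesis by blast
  qed
  have all: "P {t+1..t+k} = P {1..k}" if "t \<le> k" for t
    using that
  proof (induction t)
    case 0 then show ?case by simp
  next
    case (Suc t) then show ?case using step[of t] by simp
  qed
  have "P {k+1..k+k} \<noteq> P {1..k}"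
    by (rule H) (use nk in auto)
  then show False using all[of k] by simp
qed

theorem mainTheorem4:
  fixes n k :: nat
  assumes "k \<ge> 1" and "n \<ge> 2 * k + 1"
    and "has_hamilton_cycle (kneser_vertices n k) kneser_adj"
  shows "has_hamilton_cycle (bip_kneser_vertices n k) (bip_kneser_adj n k)
       \<or> has_hamilton_path (bip_kneser_vertices n k) (bip_kneser_adj n k)"
proof -
  obtain xs where hc: "hamilton_cycle (kneser_vertices n k) kneser_adj xs"
    using assms(3) unfolding has_hamilton_cycle_def by blast
  define N where "N = length xs"
  define K where "K = kneser_vertices n k"
  define V where "V = bip_kneser_vertices n k"
  define U where "U = {1..(n::nat)}"
  define A where "A m = xs ! (m mod N)" for m
  define c where "c X = U - X" for X
  define h where "h b m = (if even (m + b) then A m else c (A m))" for b m :: nat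
  have dist: "distinct xs" and setxs: "set xs = K" and N3: "N \<ge> 3"
    and cons: "\<And>i. Suc i < N \<Longrightarrow> xs ! i \<inter> xs ! Suc i = {}"
    and lh: "last xs \<inter> hd xs = {}"
    using hc unfolding hamilton_cycle_def K_def N_def kneser_adj_def by auto
  have N0: "N > 0" using N3 by simp
  have AK: "A m \<in> K" for m
    unfolding A_def using setxs N0 N_def by (metis mod_less_divisor nth_mem)
  have KU: "X \<in> K \<Longrightarrow> X \<subseteq> U \<and> card X = k" for X
    unfolding K_def kneser_vertices_def U_def by auto
  have finU: "finite U" and cardU: "card U = n" unfolding U_def by auto
  have nk: "k < n - k" using assms by simp
  have Adisj: "A m \<inter> A (Suc m) = {}" for m
  proof (cases "Suc (m mod N) = N")
    case True
    then have mm: "m mod N = N - 1" by simp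
    then have "A m = last xs" "A (Suc m) = hd xs"
      unfolding A_def using N0 N_def True
      by (auto simp: last_conv_nth hd_conv_nth mod_Suc)
    then show ?thesis using lh by simp
  next
    case False
    then have "Suc (m mod N) < N" using N0 by (metis Suc_lessI mod_less_divisor)
    then show ?thesis unfolding A_def using cons False by (simp add: mod_Suc)
  qed
  have cardc: "card (c X) = n - k" if "X \<in> K" for X
    unfolding c_def using KU[OF that] finU cardU by (metis card_Diff_subset finite_subset)
  have cU: "c X \<subseteq> U" for X unfolding c_def by auto
  have adj1: "bip_kneser_adj n k X (c Y) \<and> bip_kneser_adj n k (c Y) X"
    if "X \<in> K" "Y \<in> K" "X \<inter> Y = {}" for X Y
    using KU[OF that(1)] cardc[OF that(2)] that(3) unfolding bip_kneser_adj_def c_def by auto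
  have hadj: "bip_kneser_adj n k (h b m) (h b (Suc m))" for b m
  proof (cases "even (m + b)")
    case True
    then show ?thesis unfolding h_def using adj1[OF AK AK Adisj] by simp
  next
    case False
    have "A (Suc m) \<inter> A m = {}" using Adisj[of m] by blast
    then show ?thesis unfolding h_def using False adj1[OF AK AK, of "Suc m" m] by simp
  qed
  have Ainj: "A m = A m' \<Longrightarrow> m mod N = m' mod N" for m m'
    unfolding A_def using dist N0 N_def by (simp add: nth_eq_iff_index_eq)
  have cinj: "X = Y" if "X \<in> K" "Y \<in> K" "c X = c Y" for X Y
  proof -
    have "U - c X = X" "U - c Y = Y" using KU that unfolding c_def by auto
    then show ?thesis using that(3) by metis
  qed
  have cneq: "X \<noteq> c Y" if "X \<in> K" "Y \<in> K" for X Y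
    using KU[OF that(1)] cardc[OF that(2)] nk by auto
  have heq: "m mod N = m' mod N \<and> (even (m+b) \<longleftrightarrow> even (m'+b'))" if "h b m = h b' m'" for b b' m m'
    using that unfolding h_def
    by (auto split: if_splits dest: Ainj cinj[OF AK AK] simp: cneq[OF AK AK] cneq[OF AK AK, symmetric])
  have Veq: "V = K \<union> c ` K"
  proof
    show "V \<subseteq> K \<union> c ` K"
    proof
      fix Y assume "Y \<in> V"
      then have "Y \<subseteq> U \<and> (card Y = k \<or> card Y = n - k)"
        unfolding V_def bip_kneser_vertices_def U_def by auto
      moreover have "Y \<in> c ` K" if "Y \<subseteq> U" "card Y = n - k"
      proof
        show "Y = c (U - Y)" unfolding c_def using that by auto
        have "card (U - Y) = n - (n - k)" using that finU cardU
          by (metis card_Diff_subset finite_subset)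
        then have "card (U - Y) = k" using assms by simp
        then show "U - Y \<in> K" unfolding K_def kneser_vertices_def U_def by auto
      qed
      ultimately show "Y \<in> K \<union> c ` K"
        unfolding K_def kneser_vertices_def U_def by auto
    qed
    show "K \<union> c ` K \<subseteq> V"
      using KU cardc cU unfolding V_def bip_kneser_vertices_def K_def U_def kneser_vertices_def
      by auto
  qed
  have finK: "finite K" using setxs by (metis List.finite_set)
  have cardK: "card K = N" using setxs dist N_def distinct_card by metis
  have cardV: "card V = 2 * N"
  proof -
    have "card (c ` K) = card K"
      by (rule card_image) (meson inj_onI cinj)
    moreover have "K \<inter> c ` K = {}" using cneq by auto
    ultimately show ?thesis using Veq finK cardK card_Un_disjoint by (metis finite_imageI mult_2)
  qed
  have finV: "finite V" using Veq finK by simp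
  have hV: "h b m \<in> V" for b m
    unfolding h_def Veq using AK by auto
  have fill: "set ys = V" if "distinct ys" "set ys \<subseteq> V" "length ys = 2 * N" for ys :: "nat set list"
    using that card_subset_eq[OF finV] cardV distinct_card by metis
  show ?thesis
  proof (cases "even N")
    case False
    define ys where "ys = map (h 0) [0..<2*N]"
    have len: "length ys = 2 * N" unfolding ys_def by simp
    have nth: "ys ! i = h 0 i" if "i < 2 * N" for i unfolding ys_def using that by simp
    have d: "distinct ys" unfolding ys_def
    proof (rule distinct_map[THEN iffD2], intro conjI inj_onI)
      fix m m' assume "m \<in> set [0..<2*N]" "m' \<in> set [0..<2*N]" "h 0 m = h 0 m'"
      then show "m = m'" using heq[of 0 m 0 m'] odd_double[OF False] by auto
    qed simp
    have s: "set ys \<subseteq> V" unfolding ys_def using hV by auto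
    have e: "h 0 (2*N) = h 0 0" unfolding h_def A_def by simp
    have "hamilton_cycle V (bip_kneser_adj n k) ys"
      unfolding hamilton_cycle_def
    proof (intro conjI allI impI)
      show "distinct ys" by (rule d)
      show "set ys = V" using fill d s len by blast
      show "3 \<le> length ys" using len N3 by simp
      fix i assume "Suc i < length ys"
      then show "bip_kneser_adj n k (ys ! i) (ys ! Suc i)" using nth len hadj by simp
    next
      have ne: "ys \<noteq> []" using len N0 by auto
      have "last ys = h 0 (2*N - 1)" using ne len N0 nth[of "2*N-1"] by (simp add: last_conv_nth)
      moreover have "hd ys = h 0 0" using ne len N0 nth[of 0] by (simp add: hd_conv_nth)
      moreover have "Suc (2*N - 1) = 2*N" using N0 by simp
      ultimately show "bip_kneser_adj n k (last ys) (hd ys)"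
        using hadj[of 0 "2*N-1"] e by metis
    qed
    then show ?thesis unfolding has_hamilton_cycle_def V_def by blast
  next
    case True
    have "\<exists>i j. i < N \<and> j < N \<and> (even i \<longleftrightarrow> even j) \<and> A i \<inter> A j = {}"
    proof (rule ccontr)
      assume neg: "\<not> ?thesis"
      define P where "P X = (\<exists>i<N. xs ! i = X \<and> even i)" for X
      show False
      proof (rule nonbip[OF assms(1,2), of P])
        fix X Y assume XY: "X \<subseteq> {1..n}" "card X = k" "Y \<subseteq> {1..n}" "card Y = k" "X \<inter> Y = {}"
        then have "X \<in> set xs" "Y \<in> set xs" using setxs unfolding K_def kneser_vertices_def by auto
        then obtain p q where pq: "p < N" "xs ! p = X" "q < N" "xs ! q = Y"
          unfolding N_def by (metis in_set_conv_nth)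
        have PX: "P X \<longleftrightarrow> even p" unfolding P_def using pq dist N_def
          by (metis nth_eq_iff_index_eq)
        have PY: "P Y \<longleftrightarrow> even q" unfolding P_def using pq dist N_def
          by (metis nth_eq_iff_index_eq)
        have "A p = X" "A q = Y" unfolding A_def using pq by auto
        then show "P X \<noteq> P Y" using neg pq XY(5) PX PY by metis
      qed
    qed
    then obtain i j where ij: "i < N" "j < N" "even i \<longleftrightarrow> even j" "A i \<inter> A j = {}" by blast
    define ys where "ys = map (\<lambda>m. h 0 (i+1+m)) [0..<N] @ map (\<lambda>m. h 1 (j+m)) [0..<N]"
    have len: "length ys = 2 * N" unfolding ys_def by simp
    have nth1: "ys ! t = h 0 (i+1+t)" if "t < N" for t unfolding ys_def using that by (simp add: nth_append)
    have nth2: "ys ! t = h 1 (j+(t-N))" if "t \<ge> N" "t < 2*N" for t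
    proof -
      have "t - N < N" using that by simp
      then show ?thesis unfolding ys_def using that by (simp add: nth_append del: upt_Suc)
    qed
    have par: "even (x mod N) \<longleftrightarrow> even x" for x using even_mod_even[OF True] .
    have d: "distinct ys" unfolding ys_def distinct_append
    proof (intro conjI)
      show "distinct (map (\<lambda>m. h 0 (i+1+m)) [0..<N])"
      proof (rule distinct_map[THEN iffD2], intro conjI inj_onI)
        fix m m' assume "m \<in> set [0..<N]" "m' \<in> set [0..<N]" "h 0 (i+1+m) = h 0 (i+1+m')"
        then show "m = m'" using heq mod_cancel_lt by (metis atLeastLessThan_iff set_upt)
      qed simp
      show "distinct (map (\<lambda>m. h 1 (j+m)) [0..<N])"
      proof (rule distinct_map[THEN iffD2], intro conjI inj_onI)
        fix m m' assume "m \<in> set [0..<N]" "m' \<in> set [0..<N]" "h 1 (j+m) = h 1 (j+m')"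
        then show "m = m'" using heq mod_cancel_lt by (metis atLeastLessThan_iff set_upt)
      qed simp
      show "set (map (\<lambda>m. h 0 (i+1+m)) [0..<N]) \<inter> set (map (\<lambda>m. h 1 (j+m)) [0..<N]) = {}"
      proof (rule ccontr)
        assume "\<not> ?thesis"
        then obtain m m' where "h 0 (i+1+m) = h 1 (j+m')" by auto
        from heq[OF this] have "(i+1+m) mod N = (j+m') mod N" "even (i+1+m+0) \<longleftrightarrow> even (j+m'+1)"
          by auto
        then have "even (i+1+m) \<longleftrightarrow> even (j+m')" "even (i+1+m) \<longleftrightarrow> even (j+m'+1)"
          using par[of "i+1+m"] par[of "j+m'"] by simp_all
        then show False by (simp; blast)
      qed
    qed
    have s: "set ys \<subseteq> V" unfolding ys_def using hV by auto
    have e: "h 0 (i+1+(N-1)) = h 0 i"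
    proof -
      have "i+1+(N-1) = i + N" using N0 by simp
      moreover have "A (i+N) = A i" unfolding A_def by simp
      moreover have "even (i+N) \<longleftrightarrow> even i" using True by simp
      ultimately show ?thesis unfolding h_def by simp
    qed
    have junc: "bip_kneser_adj n k (h 0 i) (h 1 j)"
    proof (cases "even i")
      case True
      then show ?thesis unfolding h_def using ij adj1[OF AK AK, of i j] by simp
    next
      case False
      have "A j \<inter> A i = {}" using ij by blast
      then show ?thesis unfolding h_def using False ij adj1[OF AK AK, of j i] by simp
    qed
    have "hamilton_path V (bip_kneser_adj n k) ys"
      unfolding hamilton_path_def
    proof (intro conjI allI impI)
      show "distinct ys" by (rule d)
      show "set ys = V" using fill d s len by blast
      show "ys \<noteq> []" using len N0 by auto
      fix t assume t: "Suc t < length ys"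
      consider "Suc t < N" | "Suc t = N" | "t \<ge> N" by linarith
      then show "bip_kneser_adj n k (ys ! t) (ys ! Suc t)"
      proof cases
        case 1 then show ?thesis using nth1 hadj[of 0 "i+1+t"] by simp
      next
        case 2
        then have "ys ! t = h 0 i" "ys ! Suc t = h 1 j"
          using nth1[of t] nth2[of "Suc t"] e N0 len t by auto
        then show ?thesis using junc by simp
      next
        case 3
        then have "ys ! t = h 1 (j+(t-N))" "ys ! Suc t = h 1 (Suc (j+(t-N)))"
          using nth2[of t] nth2[of "Suc t"] len t by (auto simp: Suc_diff_le)
        then show ?thesis using hadj by simp
      qed
    qed
    then show ?thesis unfolding has_hamilton_path_def V_def by blast
  qed
qed

end
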